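(* For every positive integer $x$ there exist square-primes $a,b$ such that $x=a-b$.
   Context: A square-prime (SP-number) is a positive integer of the form $k^2p$ with $k\ge 2$ an integer and $p$ a prime. *)

theory Defs
  imports "HOL-Computational_Algebra.Primes"
begin

definition sp_number :: "nat \<Rightarrow> bool" where
  "sp_number n \<longleftrightarrow> (\<exists>k p. k \<ge> 2 \<and> prime p \<and> n = k^2 * p)"

end

theory Submission imports Defs "HOL-Analysis.Kronecker_Approximation_Theorem" begin

lemma pell_bound:
  fixes h k :: int and D :: nat
  assumes "(h,k) \<in> approx_set (sqrt (real D))" "D > 0"
  shows "\<bar>h^2 - int D * k^2\<bar> \<le> 2 * int D + 1"
proof -
  define \<theta> where "\<theta> = sqrt (real D)"
  have k: "k > 0" and a: "\<bar>\<theta> - h / k\<bar> < 1 / (real_of_int k)^2"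
    using assms(1) by (auto simp: approx_set_def \<theta>_def)
  have k1: "real_of_int k \<ge> 1" using k by simp
  define e where "e = k * \<theta> - h"
  have "e = k * (\<theta> - h / k)" using k by (simp add: e_def field_simps)
  then have "\<bar>e\<bar> = k * \<bar>\<theta> - h / k\<bar>" using k by (simp add: abs_mult)
  also have "\<dots> < k * (1 / (real_of_int k)^2)" using a k by (intro mult_strict_left_mono) auto
  also have "\<dots> = 1 / k" by (simp add: power2_eq_square)
  finally have e: "\<bar>e\<bar> < 1 / k" .
  have e1: "\<bar>e\<bar> < 1" using e k1
    by (smt (verit) divide_le_eq_1)
  have th0: "\<theta> \<ge> 0" by (simp add: \<theta>_def)
  have s1: "1 \<le> \<theta>" unfolding \<theta>_def using assms(2) by simp
  have "\<theta> * 1 \<le> \<theta> * \<theta>" using s1 by (intro mult_left_mono) auto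
  then have thD: "\<theta> \<le> D" by (simp add: \<theta>_def)
  have th2: "\<theta>^2 = D" by (simp add: \<theta>_def)
  have eq: "real_of_int (h^2 - int D * k^2) = - e * (2 * k * \<theta> - e)"
    using th2 by (simp add: e_def power2_eq_square algebra_simps)
  have "\<bar>- e * (2 * k * \<theta> - e)\<bar> \<le> \<bar>e\<bar> * (2 * k * \<theta> + 1)"
  proof -
    have "\<bar>2 * k * \<theta> - e\<bar> \<le> 2 * k * \<theta> + 1" using e1 th0 k by (smt (verit) mult_nonneg_nonneg of_int_0_le_iff)
    then show ?thesis by (simp add: abs_mult mult_left_mono)
  qed
  also have "\<dots> \<le> (1/k) * (2 * k * \<theta> + 1)"
    using e th0 k by (intro mult_right_mono) auto
  also have "\<dots> = 2 * \<theta> + 1/k" using k by (simp add: field_simps)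
  also have "\<dots> \<le> 2 * \<theta> + 1" using k1 by simp
  finally have "\<bar>real_of_int (h^2 - int D * k^2)\<bar> \<le> 2 * \<theta> + 1" using eq by simp
  also have "\<dots> \<le> 2 * real D + 1" using thD by simp
  finally have "\<bar>real_of_int (h^2 - int D * k^2)\<bar> \<le> real_of_int (2 * int D + 1)" by simp
  then show ?thesis by linarith
qed

lemma pell:
  fixes D :: nat
  assumes irr: "sqrt (real D) \<notin> \<rat>"
  shows "\<exists>u v::int. v \<noteq> 0 \<and> u^2 - int D * v^2 = 1"
proof -
  have D0: "D > 0" using irr by (cases D) auto
  have nz: "x^2 - int D * y^2 \<noteq> 0" if "y \<noteq> 0" for x y :: int
  proof
    assume "x^2 - int D * y^2 = 0"
    then have "real_of_int (x^2) = real D * real_of_int (y^2)"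
      by (metis eq_iff_diff_eq_0 of_int_mult of_int_of_nat_eq)
    then have "real D = (real_of_int x / real_of_int y)^2" using that
      by (simp add: power_divide)
    then have "sqrt (real D) = \<bar>real_of_int x / real_of_int y\<bar>" by simp
    then show False using irr by simp
  qed
  define S where "S = approx_set (sqrt (real D))"
  have inf: "infinite S" using irr rational_iff_finite_approx_set S_def by blast
  have kpos: "snd q > 0" if "q \<in> S" for q using that by (auto simp: S_def approx_set_def)
  have bd: "\<bar>fst q^2 - int D * snd q^2\<bar> \<le> 2 * int D + 1" if "q \<in> S" for q
    using pell_bound[of "fst q" "snd q" D] that D0 by (auto simp: S_def)
  define M where "M = 2 * int D + 1"
  define g where "g = (\<lambda>q::int\<times>int. let c = fst q^2 - int D * snd q^2 in (c, fst q mod c, snd q mod c))"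
  have "g ` S \<subseteq> {-M..M} \<times> {-M..M} \<times> {-M..M}"
  proof
    fix z assume "z \<in> g ` S"
    then obtain q where q: "q \<in> S" "z = g q" by auto
    define c where "c = fst q^2 - int D * snd q^2"
    have c0: "c \<noteq> 0" using nz kpos[OF q(1)] c_def by auto
    have cb: "\<bar>c\<bar> \<le> M" using bd[OF q(1)] c_def M_def by simp
    have m1: "\<bar>fst q mod c\<bar> \<le> \<bar>c\<bar>" "\<bar>snd q mod c\<bar> \<le> \<bar>c\<bar>" using c0
      by (smt (verit) neg_mod_bound neg_mod_sign pos_mod_bound pos_mod_sign)+
    show "z \<in> {-M..M} \<times> {-M..M} \<times> {-M..M}"
      using q(2) cb m1 unfolding g_def c_def[symmetric] Let_def by auto
  qed
  then have "finite (g ` S)" by (rule finite_subset) auto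
  then have "\<not> inj_on g S" using inf finite_imageD by blast
  then obtain q1 q2 where q: "q1 \<in> S" "q2 \<in> S" "q1 \<noteq> q2" "g q1 = g q2"
    unfolding inj_on_def by blast
  obtain x1 y1 where q1: "q1 = (x1, y1)" by force
  obtain x2 y2 where q2: "q2 = (x2, y2)" by force
  define c where "c = x1^2 - int D * y1^2"
  have y1: "y1 > 0" using kpos q(1) q1 by auto
  have y2: "y2 > 0" using kpos q(2) q2 by auto
  have c0: "c \<noteq> 0" using nz y1 c_def by auto
  have c2: "x2^2 - int D * y2^2 = c" and mx: "x1 mod c = x2 mod c" and my: "y1 mod c = y2 mod c"
    using q(4) unfolding q1 q2 g_def c_def Let_def by auto
  have dx: "c dvd x2 - x1" using mx by (metis mod_eq_dvd_iff)
  have dy: "c dvd y2 - y1" using my by (metis mod_eq_dvd_iff)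
  have A: "c dvd x1 * x2 - int D * y1 * y2"
  proof -
    have "x1 * x2 - int D * y1 * y2 = c + x1 * (x2 - x1) - int D * y1 * (y2 - y1)"
      by (simp add: c_def power2_eq_square algebra_simps)
    then show ?thesis using dx dy by (simp add: dvd_add dvd_diff)
  qed
  have B: "c dvd x1 * y2 - x2 * y1"
  proof -
    have "x1 * y2 - x2 * y1 = x1 * (y2 - y1) - y1 * (x2 - x1)"
      by (simp add: algebra_simps)
    then show ?thesis using dx dy by (simp add: dvd_diff)
  qed
  obtain u where u: "x1 * x2 - int D * y1 * y2 = c * u" using A by (auto elim: dvdE)
  obtain v where v: "x1 * y2 - x2 * y1 = c * v" using B by (auto elim: dvdE)
  have id: "(x1 * x2 - int D * y1 * y2)^2 - int D * (x1 * y2 - x2 * y1)^2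
          = (x1^2 - int D * y1^2) * (x2^2 - int D * y2^2)"
    by (simp add: power2_eq_square algebra_simps)
  then have "(c * u)^2 - int D * (c * v)^2 = c * c"
    by (simp only: u v c2 flip: c_def)
  then have "c^2 * (u^2 - int D * v^2) = c^2 * 1"
    by (simp add: power2_eq_square algebra_simps)
  then have uv: "u^2 - int D * v^2 = 1" using c0 by simp
  have "v \<noteq> 0"
  proof
    assume "v = 0"
    then have e: "x1 * y2 = x2 * y1" using v by simp
    have "c * y2^2 = c * y1^2"
    proof -
      have "c * y2^2 = (x1 * y2)^2 - int D * y1^2 * y2^2" by (simp add: c_def power2_eq_square algebra_simps)
      also have "\<dots> = (x2 * y1)^2 - int D * y1^2 * y2^2" using e by simp
      also have "\<dots> = c * y1^2" by (simp add: c2[symmetric] power2_eq_square algebra_simps)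
      finally show ?thesis .
    qed
    then have "y2^2 = y1^2" using c0 by simp
    then have "y2 = y1" using y1 y2 by (simp add: power2_eq_iff_nonneg)
    then have "x1 = x2" using e y1 by simp
    then show False using q(3) q1 q2 \<open>y2 = y1\<close> by simp
  qed
  then show ?thesis using uv by blast
qed


lemma prime5: "prime (5::nat)" by (simp add: prime_nat_iff' numeral_eq_Suc atLeastLessThanSuc; presburger)
lemma prime7: "prime (7::nat)" by (simp add: prime_nat_iff' numeral_eq_Suc atLeastLessThanSuc; presburger)
lemma prime11: "prime (11::nat)" by (simp add: prime_nat_iff' numeral_eq_Suc atLeastLessThanSuc; presburger)

lemma sqrt_2p_irrat:
  fixes p :: nat
  assumes "prime p" "p \<noteq> 2"
  shows "sqrt (real (2 * p)) \<notin> \<rat>"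
proof
  assume "sqrt (real (2*p)) \<in> \<rat>"
  then obtain m n :: nat
    where n: "n \<noteq> 0"
      and sqrt_rat: "\<bar>sqrt (real (2*p))\<bar> = m / n"
      and "coprime m n" by (rule Rats_abs_nat_div_natE)
  have eq: "m\<^sup>2 = (2*p) * n\<^sup>2"
  proof -
    from n and sqrt_rat have "m = \<bar>sqrt (real (2*p))\<bar> * n" by simp
    then have "real (m\<^sup>2) = (sqrt (real (2*p)))\<^sup>2 * n\<^sup>2" by (simp add: power_mult_distrib)
    also have "(sqrt (real (2*p)))\<^sup>2 = real (2*p)" by simp
    finally show ?thesis by (metis of_nat_eq_iff of_nat_mult of_nat_power)
  qed
  have "p dvd m\<^sup>2" using eq by (metis dvd_triv_left mult.assoc mult.commute)
  with \<open>prime p\<close> have pm: "p dvd m" by (rule prime_dvd_power)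
  then obtain k where "m = p * k" ..
  with eq have "p * p * k^2 = p * (2 * n\<^sup>2)" by (simp add: power2_eq_square algebra_simps)
  then have "p * k^2 = 2 * n\<^sup>2" using prime_gt_0_nat[OF assms(1)] by simp
  then have "p dvd 2 * n\<^sup>2" by (metis dvd_triv_left)
  then have "p dvd 2 \<or> p dvd n\<^sup>2" using assms(1) prime_dvd_mult_iff by blast
  moreover have "\<not> p dvd 2"
    using assms primes_dvd_imp_eq two_is_prime_nat by blast
  ultimately have "p dvd n" using assms(1) prime_dvd_power by blast
  with pm have "p dvd gcd m n" by simp
  with \<open>coprime m n\<close> assms(1) show False by simp
qed

lemma prime_case:
  fixes p :: nat
  assumes "prime p"
  shows "\<exists>a b. sp_number a \<and> sp_number b \<and> int p = int a - int b"
proof (cases "p = 2")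
  case True
  have "sp_number 20" unfolding sp_number_def
    by (rule exI[of _ 2], rule exI[of _ 5]) (simp add: prime5)
  moreover have "sp_number 18" unfolding sp_number_def
    by (rule exI[of _ 3], rule exI[of _ 2]) simp
  ultimately show ?thesis using True by (intro exI[of _ 20] exI[of _ 18]) simp
next
  case False
  have "p \<ge> 2" using assms prime_ge_2_nat by blast
  then have p2: "p \<ge> 3" using False by linarith
  obtain u v :: int where v: "v \<noteq> 0" and uv: "u^2 - int (2*p) * v^2 = 1"
    using pell[OF sqrt_2p_irrat[OF assms False]] by blast
  define k where "k = nat \<bar>u\<bar>"
  define w where "w = nat \<bar>v\<bar>"
  have w1: "w \<ge> 1" using v w_def by simp
  have kk: "int (k^2) = u^2" by (simp add: k_def)
  have ww: "int (w^2) = v^2" by (simp add: w_def)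
  have "int (k^2) = 1 + 2 * int p * int (w^2)" using uv kk ww by simp
  then have "int (k^2) = int (1 + 2 * p * w^2)" by simp
  then have "k^2 = 1 + 2 * p * w^2" by (rule of_nat_eq_iff[THEN iffD1])
  moreover have "w^2 \<ge> 1" using w1 by simp
  moreover have "2 * p * w^2 \<ge> 2 * 3 * 1" using p2 \<open>w^2 \<ge> 1\<close> by (intro mult_le_mono) auto
  ultimately have k4: "k^2 \<ge> 7" by linarith
  have k2: "k \<ge> 2"
  proof (rule ccontr)
    assume "\<not> k \<ge> 2" then have "k = 0 \<or> k = 1" by auto
    then show False using k4 by auto
  qed
  have "p * w \<ge> 3 * 1" using p2 w1 by (intro mult_le_mono) auto
  then have pw: "p * w \<ge> 2" by linarith
  have sa: "sp_number (k^2 * p)" unfolding sp_number_def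
    by (rule exI[of _ k], rule exI[of _ p]) (simp add: k2 assms)
  have sb: "sp_number ((p*w)^2 * 2)" unfolding sp_number_def
    by (rule exI[of _ "p*w"], rule exI[of _ 2]) (simp add: pw)
  have "int (k^2 * p) - int ((p*w)^2 * 2) = int p * (u^2 - int (2*p) * v^2)"
  proof -
    have "int (k^2 * p) - int ((p*w)^2 * 2) = int (k^2) * int p - int p * int p * int (w^2) * 2"
      by (simp add: power_mult_distrib power2_eq_square)
    also have "\<dots> = int p * (u^2 - int (2*p) * v^2)" unfolding kk ww by (simp add: algebra_simps)
    finally show ?thesis .
  qed
  then have "int p = int (k^2 * p) - int ((p*w)^2 * 2)" using uv by simp
  then show ?thesis using sa sb by blast
qed

lemma scale_case:
  assumes "sp_number a" "c \<ge> 1"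
  shows "sp_number (c^2 * a)"
proof -
  obtain k p where "k \<ge> 2" "prime p" "a = k^2 * p" using assms(1) sp_number_def by auto
  moreover have "c * k \<ge> 1 * 2" using \<open>k \<ge> 2\<close> assms(2) by (intro mult_le_mono) auto
  ultimately show ?thesis unfolding sp_number_def
    by (intro exI[of _ "c*k"] exI[of _ p]) (simp add: power_mult_distrib mult.assoc)
qed

lemma same_prime_case:
  fixes p t :: nat
  assumes "prime p" "t \<ge> 2"
  shows "\<exists>a b. sp_number a \<and> sp_number b \<and> int (p * (2*t+1)) = int a - int b"
proof -
  have sa: "sp_number ((t+1)^2 * p)" unfolding sp_number_def
    by (rule exI[of _ "t+1"], rule exI[of _ p]) (use assms in auto)
  have sb: "sp_number (t^2 * p)" unfolding sp_number_def
    by (rule exI[of _ t], rule exI[of _ p]) (use assms in simp)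
  have e: "(t+1)^2 * p = t^2 * p + p * (2*t+1)" by (simp add: power2_eq_square algebra_simps)
  have eq: "int (p * (2*t+1)) = int ((t+1)^2 * p) - int (t^2 * p)"
    unfolding e of_nat_add by simp
  show ?thesis by (rule exI, rule exI, intro conjI, rule sa, rule sb, rule eq)
qed

theorem lemma3p1:
  fixes x :: nat
  assumes "x > 0"
  shows "\<exists>a b. sp_number a \<and> sp_number b \<and> int x = int a - int b"
  using assms
proof (induction x rule: less_induct)
  case (less x)
  show ?case
  proof (cases "\<exists>c. c \<ge> 2 \<and> c^2 dvd x")
    case True
    then obtain c z where c: "c \<ge> 2" "x = c^2 * z" by (auto elim: dvdE)
    have z0: "z > 0" using less.prems c by (cases z) auto
    have "c * c \<ge> 2 * 2" using c(1) by (intro mult_le_mono) auto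
    then have "c^2 * z \<ge> 4 * z" by (simp add: power2_eq_square)
    then have "z < x" using c z0 by linarith
    then obtain a b where ab: "sp_number a" "sp_number b" "int z = int a - int b"
      using less.IH z0 by blast
    have "int x = int (c^2) * (int a - int b)" using ab(3) c(2) by simp
    then have "int x = int (c^2 * a) - int (c^2 * b)" by (simp only: right_diff_distrib of_nat_mult)
    moreover have "sp_number (c^2 * a)" "sp_number (c^2 * b)"
      using scale_case[OF ab(1), of c] scale_case[OF ab(2), of c] c(1) by auto
    ultimately show ?thesis by (intro exI[of _ "c^2 * a"] exI[of _ "c^2 * b"]) blast
  next
    case nsq: False
    show ?thesis
    proof (cases "x = 1")
      case True
      have "sp_number 28" unfolding sp_number_def
        by (rule exI[of _ 2], rule exI[of _ 7]) (simp add: prime7)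
      moreover have "sp_number 27" unfolding sp_number_def
        by (rule exI[of _ 3], rule exI[of _ 3]) simp
      ultimately show ?thesis using True by (intro exI[of _ 28] exI[of _ 27]) simp
    next
      case x1: False
      show ?thesis
      proof (cases "prime x")
        case True then show ?thesis by (rule prime_case)
      next
        case np: False
        show ?thesis
        proof (cases "even x")
          case True
          then obtain y where y: "x = 2 * y" by blast
          have yodd: "odd y"
          proof
            assume "even y" then obtain z where "y = 2*z" by blast
            then have "2^2 dvd x" using y by simp
            then show False using nsq by blast
          qed
          have "y \<noteq> 1" using np y two_is_prime_nat by auto
          obtain t0 where t0: "y = 2*t0+1" using yodd by (rule oddE)
          then have t: "y = 2*t0+1" "t0 \<ge> 1" using \<open>y \<noteq> 1\<close> by auto
          show ?thesis
          proof (cases "t0 = 1")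
            case True
            then have x6: "x = 6" using t y by simp
            have "sp_number 50" unfolding sp_number_def
              by (rule exI[of _ 5], rule exI[of _ 2]) simp
            moreover have "sp_number 44" unfolding sp_number_def
              by (rule exI[of _ 2], rule exI[of _ 11]) (simp add: prime11)
            ultimately show ?thesis using x6 by (intro exI[of _ 50] exI[of _ 44]) simp
          next
            case False
            then have "t0 \<ge> 2" using t by simp
            then show ?thesis using same_prime_case[OF two_is_prime_nat, of t0] t y by simp
          qed
        next
          case xodd: False
          obtain p where p: "prime p" "p dvd x" using x1 prime_factor_nat by blast
          then obtain y where y: "x = p * y" by blast
          have podd: "odd p" using xodd y by auto
          have yodd: "odd y" using xodd y by auto
          have "y \<noteq> 1" using np y p by auto
          obtain t0 where t0: "y = 2*t0+1" using yodd by (rule oddE)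
          then have t: "y = 2*t0+1" "t0 \<ge> 1" using \<open>y \<noteq> 1\<close> by auto
          show ?thesis
          proof (cases "t0 = 1")
            case True
            then have y3: "y = 3" using t by simp
            have "p \<noteq> 3"
            proof
              assume "p = 3" then have "3^2 dvd x" using y y3 by simp
              moreover have "(3::nat) \<ge> 2" by simp
              ultimately show False using nsq by blast
            qed
            moreover have "p \<ge> 2" using p prime_ge_2_nat by blast
            ultimately have p5: "p \<ge> 5" using podd by presburger
            obtain r0 where s0: "p = 2*r0+1" using podd by (rule oddE)
            then have r0: "p = 2*r0+1" "r0 \<ge> 2" using p5 by auto
            have "x = 3 * (2*r0+1)" using y y3 r0 by simp
            moreover have "prime (3::nat)" by simp
            ultimately show ?thesis using same_prime_case[of 3 r0] r0 by simp
          next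
            case False
            then have "t0 \<ge> 2" using t by simp
            then show ?thesis using same_prime_case[OF p(1), of t0] t y by simp
          qed
        qed
      qed
    qed
  qed
qed

end
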